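(* The action of ${\rm PSL}_2(\mathbb Z)$ on $\Delta$ by automorphisms, in which $\rho$ sends $A\mapsto B$, $B\mapsto C$, $C\mapsto A$, $\alpha\mapsto\beta$, $\beta\mapsto\gamma$, $\gamma\mapsto\alpha$ and $\sigma$ sends $A\mapsto B$, $B\mapsto A$, $C\mapsto C+\frac{AB-BA}{q-q^{-1}}$, $\alpha\mapsto\beta$, $\beta\mapsto\alpha$, $\gamma\mapsto\gamma$, is faithful.
   Context: Let $\mathbb F$ be a field and fix a nonzero $q\in\mathbb F$ with $q^4\neq 1$. The universal Askey--Wilson algebra $\Delta$ is the associative $\mathbb F$-algebra with 1 with generators $A,B,C$ subject to the relations that each of $A+\frac{qBC-q^{-1}CB}{q^2-q^{-2}}$, $B+\frac{qCA-q^{-1}AC}{q^2-q^{-2}}$, $C+\frac{qAB-q^{-1}BA}{q^2-q^{-2}}$ is central; $\alpha,\beta,\gamma$ are these three central elements (in order) each multiplied by $q+q^{-1}$. ${\rm PSL}_2(\mathbb Z)$ is presented by generators $\rho,\sigma$ with relations $\rho^3=\sigma^2=1$; the stated assignments define an action of ${\rm PSL}_2(\mathbb Z)$ on $\Delta$ by automorphisms. *)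

theory Defs
  imports Main "HOL-Library.Poly_Mapping"
begin

datatype gen = GA | GB | GC

text \<open>Words in the generators, forming the free monoid (written additively
  so that the library's monoid algebra construction applies).\<close>
datatype word = W "gen list"

instantiation word :: monoid_add
begin
definition zero_word :: word where "zero_word = W []"
fun plus_word :: "word \<Rightarrow> word \<Rightarrow> word" where
  "plus_word (W u) (W v) = W (u @ v)"
instance
proof
  fix a b c :: word
  show "a + b + c = a + (b + c)" by (cases a; cases b; cases c) simp
  show "0 + a = a" by (cases a) (simp add: zero_word_def)
  show "a + 0 = a" by (cases a) (simp add: zero_word_def)
qed
end

text \<open>The free associative algebra over the field 'a: finitely supported
  functions word => 'a with convolution product (a ring_1).\<close>
type_synonym 'a falg = "word \<Rightarrow>\<^sub>0 'a"

definition sc :: "'a::field \<Rightarrow> 'a falg" where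
  "sc c = Poly_Mapping.single (W []) c"

definition gn :: "gen \<Rightarrow> 'a::field falg" where
  "gn g = Poly_Mapping.single (W [g]) 1"

abbreviation "genA \<equiv> gn GA"
abbreviation "genB \<equiv> gn GB"
abbreviation "genC \<equiv> gn GC"

fun wmon :: "(gen \<Rightarrow> 'a::field falg) \<Rightarrow> word \<Rightarrow> 'a falg" where
  "wmon f (W l) = prod_list (map f l)"

definition subst :: "(gen \<Rightarrow> 'a::field falg) \<Rightarrow> 'a falg \<Rightarrow> 'a falg" where
  "subst f x = (\<Sum>m\<in>Poly_Mapping.keys x. sc (Poly_Mapping.lookup x m) * wmon f m)"

inductive_set ideal_gen :: "'b::ring set \<Rightarrow> 'b set" for R where
  base: "r \<in> R \<Longrightarrow> r \<in> ideal_gen R"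
| zero: "0 \<in> ideal_gen R"
| add: "x \<in> ideal_gen R \<Longrightarrow> y \<in> ideal_gen R \<Longrightarrow> x + y \<in> ideal_gen R"
| lmult: "x \<in> ideal_gen R \<Longrightarrow> a * x \<in> ideal_gen R"
| rmult: "x \<in> ideal_gen R \<Longrightarrow> x * a \<in> ideal_gen R"

definition cen :: "'a::field \<Rightarrow> 'a falg \<Rightarrow> 'a falg \<Rightarrow> 'a falg \<Rightarrow> 'a falg" where
  "cen q X Y Z = X + sc (inverse (q^2 - inverse q ^ 2)) *
      (sc q * Y * Z - sc (inverse q) * Z * Y)"

definition aw_rels :: "'a::field \<Rightarrow> 'a falg set" where
  "aw_rels q = {c * g - g * c | c g.
      c \<in> {cen q genA genB genC, cen q genB genC genA, cen q genC genA genB} \<and>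
      g \<in> {genA, genB, genC}}"

text \<open>Delta = (free algebra) / aw_ideal q.\<close>
definition aw_ideal :: "'a::field \<Rightarrow> 'a falg set" where
  "aw_ideal q = ideal_gen (aw_rels q)"

datatype psl_gen = Rho | Sig

fun img :: "'a::field \<Rightarrow> psl_gen \<Rightarrow> gen \<Rightarrow> 'a falg" where
  "img q Rho GA = genB"
| "img q Rho GB = genC"
| "img q Rho GC = genA"
| "img q Sig GA = genB"
| "img q Sig GB = genA"
| "img q Sig GC = genC + sc (inverse (q - inverse q)) * (genA * genB - genB * genA)"

text \<open>Action of a word g1 g2 ... gn in rho, sigma: the composite
  phi_g1 o phi_g2 o ... o phi_gn (on the free algebra; it descends to Delta).\<close>
fun act :: "'a::field \<Rightarrow> psl_gen list \<Rightarrow> 'a falg \<Rightarrow> 'a falg" where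
  "act q [] x = x"
| "act q (g # w) x = subst (img q g) (act q w x)"

text \<open>Word problem of PSL_2(Z) = < rho, sigma | rho^3 = sigma^2 = 1 >:
  the congruence on words generated by deleting/inserting relators.\<close>
inductive psl_step :: "psl_gen list \<Rightarrow> psl_gen list \<Rightarrow> bool" where
  "r \<in> {[Rho, Rho, Rho], [Sig, Sig]} \<Longrightarrow> psl_step (u @ r @ v) (u @ v)"

definition psl_eq :: "psl_gen list \<Rightarrow> psl_gen list \<Rightarrow> bool" where
  "psl_eq = (sup psl_step psl_step\<inverse>\<inverse>)\<^sup>*\<^sup>*"

end

theory Submission
  imports Defs "HOL-Library.Product_Plus"
begin

fun wm :: "(gen \<Rightarrow> 'b::monoid_mult) \<Rightarrow> word \<Rightarrow> 'b" where
  "wm h (W l) = prod_list (map h l)"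

lemma wm_plus: "wm h (m + m') = wm h m * wm h m'"
  by (cases m; cases m') simp

lemma wm_zero: "wm h 0 = 1"
  by (simp add: zero_word_def)

definition Lin :: "('a::field \<Rightarrow> 'b::ring_1) \<Rightarrow> (gen \<Rightarrow> 'b) \<Rightarrow> 'a falg \<Rightarrow> 'b" where
  "Lin \<kappa> h x = (\<Sum>m\<in>Poly_Mapping.keys x. \<kappa> (Poly_Mapping.lookup x m) * wm h m)"

lemma update_single_add: "a \<notin> Poly_Mapping.keys f \<Longrightarrow> Poly_Mapping.update a b f = Poly_Mapping.single a b + f"
  by (rule poly_mapping_eqI) (auto simp: lookup_update lookup_add lookup_single when_def in_keys_iff)

locale scal =
  fixes \<kappa> :: "'a::field \<Rightarrow> 'b::ring_1"
  assumes \<kappa>_add: "\<kappa> (a + b) = \<kappa> a + \<kappa> b"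
    and \<kappa>_mult: "\<kappa> (a * b) = \<kappa> a * \<kappa> b"
    and \<kappa>_one: "\<kappa> 1 = 1"
    and \<kappa>_comm: "\<kappa> a * y = y * \<kappa> a"
begin

lemma \<kappa>_zero: "\<kappa> 0 = 0"
  using \<kappa>_add[of 0 0] by simp

lemma Lin_superset: "finite S \<Longrightarrow> Poly_Mapping.keys x \<subseteq> S \<Longrightarrow>
   Lin \<kappa> h x = (\<Sum>m\<in>S. \<kappa> (Poly_Mapping.lookup x m) * wm h m)"
  unfolding Lin_def
  by (rule sum.mono_neutral_left) (auto simp: in_keys_iff \<kappa>_zero)

lemma Lin_zero [simp]: "Lin \<kappa> h 0 = 0"
  by (simp add: Lin_def)

lemma Lin_add: "Lin \<kappa> h (x + y) = Lin \<kappa> h x + Lin \<kappa> h y"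
proof -
  let ?S = "Poly_Mapping.keys x \<union> Poly_Mapping.keys y"
  have f: "finite ?S" by simp
  have "Lin \<kappa> h (x + y) = (\<Sum>m\<in>?S. \<kappa> (Poly_Mapping.lookup (x+y) m) * wm h m)"
    by (rule Lin_superset[OF f]) (auto simp: keys_add)
  also have "\<dots> = (\<Sum>m\<in>?S. \<kappa> (Poly_Mapping.lookup x m) * wm h m + \<kappa> (Poly_Mapping.lookup y m) * wm h m)"
    by (simp add: lookup_add \<kappa>_add distrib_right)
  also have "\<dots> = Lin \<kappa> h x + Lin \<kappa> h y"
    by (simp add: sum.distrib Lin_superset[OF f])
  finally show ?thesis .
qed

lemma Lin_single: "Lin \<kappa> h (Poly_Mapping.single m c) = \<kappa> c * wm h m"
  by (cases "c = 0") (simp_all add: Lin_def \<kappa>_zero)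

lemma Lin_uminus: "Lin \<kappa> h (- x) = - Lin \<kappa> h x"
proof -
  have "Lin \<kappa> h x + Lin \<kappa> h (- x) = 0" using Lin_add[of h x "-x"] by simp
  then show ?thesis by (metis neg_eq_iff_add_eq_0)
qed

lemma Lin_diff: "Lin \<kappa> h (x - y) = Lin \<kappa> h x - Lin \<kappa> h y"
  using Lin_add[of h x "-y"] by (simp add: Lin_uminus)

lemma Lin_sum: "Lin \<kappa> h (sum f S) = (\<Sum>i\<in>S. Lin \<kappa> h (f i))"
  by (induction S rule: infinite_finite_induct) (auto simp: Lin_add)

lemma Lin_mult_single: "Lin \<kappa> h (Poly_Mapping.single a b * y) = \<kappa> b * wm h a * Lin \<kappa> h y"
proof (induction y rule: update_induct)
  case const then show ?case by simp
next
  case (update f a' b')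
  have "Lin \<kappa> h (Poly_Mapping.single a b * Poly_Mapping.update a' b' f)
     = Lin \<kappa> h (Poly_Mapping.single (a + a') (b * b')) + Lin \<kappa> h (Poly_Mapping.single a b * f)"
    using update by (simp add: update_single_add distrib_left mult_single Lin_add)
  also have "\<dots> = \<kappa> b * wm h a * (\<kappa> b' * wm h a') + \<kappa> b * wm h a * Lin \<kappa> h f"
  proof -
    have "\<kappa> b' * (wm h a * wm h a') = wm h a * (\<kappa> b' * wm h a')"
      by (metis \<kappa>_comm mult.assoc)
    then show ?thesis
      using update by (simp add: Lin_single wm_plus \<kappa>_mult mult.assoc)
  qed
  also have "\<dots> = \<kappa> b * wm h a * Lin \<kappa> h (Poly_Mapping.update a' b' f)"
    using update by (simp add: update_single_add Lin_add Lin_single distrib_left)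
  finally show ?case .
qed

lemma Lin_mult: "Lin \<kappa> h (x * y) = Lin \<kappa> h x * Lin \<kappa> h y"
proof (induction x rule: update_induct)
  case const then show ?case by simp
next
  case (update f a b)
  then show ?case
    by (simp add: update_single_add distrib_right Lin_add Lin_mult_single Lin_single)
qed

lemma Lin_one: "Lin \<kappa> h 1 = 1"
  by (simp add: Lin_single[of h 0 1, simplified] \<kappa>_one wm_zero)

lemma Lin_sc: "Lin \<kappa> h (sc c) = \<kappa> c"
  by (simp add: sc_def Lin_single \<kappa>_one)

lemma Lin_gn: "Lin \<kappa> h (gn g) = h g"
  by (simp add: gn_def Lin_single \<kappa>_one)

lemma Lin_wmon: "Lin \<kappa> h (wmon f m) = wm (\<lambda>g. Lin \<kappa> h (f g)) m"
proof (cases m)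
  case (W l)
  show ?thesis unfolding W by (induction l) (simp_all add: Lin_one Lin_mult)
qed

lemma Lin_subst: "Lin \<kappa> h (subst f x) = Lin \<kappa> (\<lambda>g. Lin \<kappa> h (f g)) x"
  unfolding subst_def Lin_sum by (simp add: Lin_mult Lin_sc Lin_wmon Lin_def[of _ "\<lambda>g. Lin \<kappa> h (f g)" x])

lemma Lin_ideal: "x \<in> ideal_gen R \<Longrightarrow> (\<And>r. r \<in> R \<Longrightarrow> Lin \<kappa> h r = 0) \<Longrightarrow> Lin \<kappa> h x = 0"
  by (induction x rule: ideal_gen.induct) (auto simp: Lin_add Lin_mult)

end


typedef (overloaded) ('a::field) lop =
  "{L :: (int \<times> int \<Rightarrow> 'a) \<Rightarrow> (int \<times> int \<Rightarrow> 'a).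
     (\<forall>f g. L (\<lambda>u. f u + g u) = (\<lambda>u. L f u + L g u)) \<and> (\<forall>c f. L (\<lambda>u. c * f u) = (\<lambda>u. c * L f u))}"
  morphisms app Abs_lop
  by (rule exI[of _ "\<lambda>f. f"]) auto

setup_lifting type_definition_lop

lemma app_add: "app L (\<lambda>u. f u + g u) = (\<lambda>u. app L f u + app L g u)"
  using app[of L] by auto

lemma app_scale: "app L (\<lambda>u. c * f u) = (\<lambda>u. c * app L f u)"
  using app[of L] by auto

lemma app_zero: "app L (\<lambda>u. 0) = (\<lambda>u. 0)"
  using app_scale[of L 0 "\<lambda>u. 0"] by simp

lemma app_uminus: "app L (\<lambda>u. - f u) = (\<lambda>u. - app L f u)"
  using app_scale[of L "-1" f] by simp

lemma app_diff: "app L (\<lambda>u. f u - g u) = (\<lambda>u. app L f u - app L g u)"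
  using app_add[of L f "\<lambda>u. - g u"] app_uminus[of L g] by simp

lemma lop_eqI: "(\<And>f u. app A f u = app B f u) \<Longrightarrow> A = B"
  by (metis app_inject ext)

instantiation lop :: (field) ring_1
begin
lift_definition zero_lop :: "'a lop" is "\<lambda>f u. 0" by (auto simp: fun_eq_iff)
lift_definition one_lop :: "'a lop" is "\<lambda>f. f" by auto
lift_definition plus_lop :: "'a lop \<Rightarrow> 'a lop \<Rightarrow> 'a lop" is "\<lambda>A B f u. A f u + B f u"
  by (auto simp: fun_eq_iff algebra_simps)
lift_definition uminus_lop :: "'a lop \<Rightarrow> 'a lop" is "\<lambda>A f u. - A f u"
  by (auto simp: fun_eq_iff algebra_simps)
lift_definition minus_lop :: "'a lop \<Rightarrow> 'a lop \<Rightarrow> 'a lop" is "\<lambda>A B f u. A f u - B f u"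
  by (auto simp: fun_eq_iff algebra_simps)
lift_definition times_lop :: "'a lop \<Rightarrow> 'a lop \<Rightarrow> 'a lop" is "\<lambda>A B f. A (B f)"
  by auto
instance
proof
  fix a b c :: "'a lop"
  note rq = plus_lop.rep_eq uminus_lop.rep_eq minus_lop.rep_eq times_lop.rep_eq zero_lop.rep_eq one_lop.rep_eq
  show "a * b * c = a * (b * c)" by (rule lop_eqI) (simp add: rq)
  show "1 * a = a" by (rule lop_eqI) (simp add: rq)
  show "a * 1 = a" by (rule lop_eqI) (simp add: rq)
  show "(a + b) * c = a * c + b * c" by (rule lop_eqI) (simp add: rq)
  show "a * (b + c) = a * b + a * c" by (rule lop_eqI) (simp add: rq app_add)
  show "a + b + c = a + (b + c)" by (rule lop_eqI) (simp add: rq add.assoc)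
  show "a + b = b + a" by (rule lop_eqI) (simp add: rq add.commute)
  show "0 + a = a" by (rule lop_eqI) (simp add: rq)
  show "- a + a = 0" by (rule lop_eqI) (simp add: rq)
  show "a - b = a + - b" by (rule lop_eqI) (simp add: rq)
  show "(0::'a lop) \<noteq> 1"
  proof
    assume "(0::'a lop) = 1"
    then have "app (0::'a lop) (\<lambda>u. 1) 0 = app (1::'a lop) (\<lambda>u. 1) 0" by simp
    then show False by (simp add: rq)
  qed
qed
end


lemmas app_simps = plus_lop.rep_eq uminus_lop.rep_eq minus_lop.rep_eq times_lop.rep_eq
  zero_lop.rep_eq one_lop.rep_eq

lift_definition ks :: "'a::field \<Rightarrow> 'a lop" is "\<lambda>c f u. c * f u"
  by (auto simp: algebra_simps)

definition om :: "int \<times> int \<Rightarrow> int \<times> int \<Rightarrow> int" where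
  "om v w = fst v * snd w - snd v * fst w"

lift_definition TT :: "'a::field \<Rightarrow> int \<times> int \<Rightarrow> 'a lop" is
  "\<lambda>q v f u. q powi (om v u) * f (u - v)"
  by (auto simp: algebra_simps)

interpretation ks: scal ks
proof
  fix a b :: 'a and y :: "'a lop"
  show "ks (a + b) = ks a + ks b" by (rule lop_eqI) (simp add: app_simps ks.rep_eq algebra_simps)
  show "ks (a * b) = ks a * ks b" by (rule lop_eqI) (simp add: app_simps ks.rep_eq algebra_simps)
  show "ks 1 = 1" by (rule lop_eqI) (simp add: app_simps ks.rep_eq)
  show "ks a * y = y * ks a" by (rule lop_eqI) (simp add: app_simps ks.rep_eq app_scale)
qed

lemma ks_uminus: "ks (- a) = - ks a"
  by (rule lop_eqI) (simp add: app_simps ks.rep_eq)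

lemma om_split: "om v u + om w (u - v) = om v w + om (v + w) u"
  by (simp add: om_def algebra_simps)

lemma TT_mult: "q \<noteq> 0 \<Longrightarrow> TT q v * TT q w = ks (q powi om v w) * TT q (v + w)"
proof (rule lop_eqI)
  fix f u assume q: "q \<noteq> 0"
  have "q powi om v u * q powi om w (u - v) = q powi om v w * q powi om (v + w) u"
    using q by (simp flip: power_int_add add: om_split)
  then show "app (TT q v * TT q w) f u = app (ks (q powi om v w) * TT q (v + w)) f u"
    by (simp add: app_simps ks.rep_eq TT.rep_eq diff_diff_eq mult.assoc[symmetric])
qed

definition E :: "'a::field \<Rightarrow> int \<times> int \<Rightarrow> 'a lop" where
  "E q v = TT q v + TT q (- v)"

lemma E_neg: "E q (- v) = E q v"
  by (simp add: E_def add.commute)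

lemma om_neg1: "om (- v) w = - om v w" and om_neg2: "om v (- w) = - om v w"
  and om_swap: "om w v = - om v w"
  by (simp_all add: om_def algebra_simps)

lemma EE: "q \<noteq> 0 \<Longrightarrow> om v w = 1 \<Longrightarrow>
   E q v * E q w = ks q * E q (v + w) + ks (inverse q) * E q (v - w)"
proof -
  assume q: "q \<noteq> 0" and o: "om v w = 1"
  have m1: "TT q v * TT q w = ks q * TT q (v + w)" using TT_mult[OF q, of v w] o by simp
  have m2: "TT q v * TT q (-w) = ks (inverse q) * TT q (v - w)"
    using TT_mult[OF q, of v "-w"] o by (simp add: om_neg2 power_int_minus)
  have m3: "TT q (-v) * TT q w = ks (inverse q) * TT q (- (v - w))"
    using TT_mult[OF q, of "-v" w] o by (simp add: om_neg1 power_int_minus)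
  have m4: "TT q (-v) * TT q (-w) = ks q * TT q (- (v + w))"
    using TT_mult[OF q, of "-v" "-w"] o by (simp add: om_neg1 om_neg2)
  show ?thesis
    unfolding E_def distrib_left distrib_right m1 m2 m3 m4 by (simp only: add_ac)
qed

lemma EE': "q \<noteq> 0 \<Longrightarrow> om v w = 1 \<Longrightarrow>
   E q w * E q v = ks (inverse q) * E q (v + w) + ks q * E q (v - w)"
proof -
  assume q: "q \<noteq> 0" and o: "om v w = 1"
  have o2: "om w (-v) = 1" using o by (simp add: om_def algebra_simps)
  have 1: "E q w * E q v = ks q * E q (w + - v) + ks (inverse q) * E q (w - - v)"
    using EE[OF q o2] by (simp only: E_neg)
  have 2: "w + - v = - (v - w)" by simp
  have 3: "w - - v = v + w" by (simp add: add.commute)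
  show ?thesis unfolding 1 2 3 E_neg by (rule add.commute)
qed


fun gm :: "psl_gen \<Rightarrow> int \<times> int \<Rightarrow> int \<times> int" where
  "gm Rho (x,y) = (-y, x-y)"
| "gm Sig (x,y) = (-y, x)"

fun mv :: "psl_gen list \<Rightarrow> int \<times> int \<Rightarrow> int \<times> int" where
  "mv [] v = v"
| "mv (g#w) v = gm g (mv w v)"

lemma gm_SS: "gm Sig (gm Sig y) = - y"
  by (cases y) auto

lemma gm_RRR: "gm Rho (gm Rho (gm Rho y)) = y"
  by (cases y) auto

lemma mv_append: "mv (u@v) x = mv u (mv v x)"
  by (induction u) auto

lemma mv_lin: "\<exists>a b c d. \<forall>x y. mv w (x,y) = (a*x+b*y, c*x+d*y)"
proof (induction w)
  case Nil
  show ?case by (rule exI[of _ 1], rule exI[of _ 0], rule exI[of _ 0], rule exI[of _ 1]) simp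
next
  case (Cons g w)
  then obtain a b c d where h: "\<forall>x y. mv w (x,y) = (a*x+b*y, c*x+d*y)" by blast
  show ?case
  proof (cases g)
    case Rho
    show ?thesis using h Rho
      by (intro exI[of _ "-c"] exI[of _ "-d"] exI[of _ "a-c"] exI[of _ "b-d"]) (auto simp: algebra_simps)
  next
    case Sig
    show ?thesis using h Sig
      by (intro exI[of _ "-c"] exI[of _ "-d"] exI[of _ "a"] exI[of _ "b"]) (auto simp: algebra_simps)
  qed
qed

lemma gm_neg: "gm g (- v) = - gm g v"
  by (cases g; cases v) auto

lemma mv_neg: "mv w (- v) = - mv w v"
  by (induction w) (auto simp: gm_neg)

lemma gm_add: "gm g (v + v') = gm g v + gm g v'"
  by (cases g; cases v; cases v') auto

lemma mv_add: "mv w (v + v') = mv w v + mv w v'"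
  by (induction w) (auto simp: gm_add)

fun red :: "psl_gen list \<Rightarrow> bool" where
  "red (a#b#c#w) = (\<not>(a=Rho \<and> b=Rho \<and> c=Rho) \<and> \<not>(a=Sig \<and> b=Sig) \<and> red (b#c#w))"
| "red [a,b] = (\<not>(a=Sig \<and> b=Sig))"
| "red [a] = True"
| "red [] = True"

lemma red_SS [simp]: "red (Sig#Sig#w) = False"
  by (cases w) auto

lemma red_Cons: "red (g#w) \<Longrightarrow> red w"
  by (cases w rule: red.cases) auto

lemma not_red: "\<not> red w \<Longrightarrow> \<exists>u r v. w = u@r@v \<and> r \<in> {[Rho,Rho,Rho],[Sig,Sig]}"
proof (induction w rule: red.induct)
  case (1 a b c w)
  show ?case
  proof (cases "a=Rho \<and> b=Rho \<and> c=Rho \<or> a=Sig \<and> b=Sig")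
    case True
    then show ?thesis
    proof (elim disjE)
      assume "a=Rho \<and> b=Rho \<and> c=Rho" then show ?thesis
        by (intro exI[of _ "[]"] exI[of _ "[Rho,Rho,Rho]"] exI[of _ w]) auto
    next
      assume "a=Sig \<and> b=Sig" then show ?thesis
        by (intro exI[of _ "[]"] exI[of _ "[Sig,Sig]"] exI[of _ "c#w"]) auto
    qed
  next
    case False
    then obtain u r v where "b#c#w = u@r@v \<and> r \<in> {[Rho,Rho,Rho],[Sig,Sig]}" using 1 by auto
    then show ?thesis by (intro exI[of _ "a#u"] exI[of _ r] exI[of _ v]) auto
  qed
next
  case (2 a b) then show ?case by (intro exI[of _ "[]"] exI[of _ "[Sig,Sig]"] exI[of _ "[]"]) auto
qed auto


inductive alt :: "psl_gen list \<Rightarrow> bool" where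
  "alt [Rho]"
| "alt [Rho,Rho]"
| "alt w \<Longrightarrow> alt (Rho#Sig#w)"
| "alt w \<Longrightarrow> alt (Rho#Rho#Sig#w)"

definition DD :: "int \<times> int \<Rightarrow> bool" where
  "DD v \<longleftrightarrow> fst v * snd v > 0 \<and> \<bar>fst v\<bar> \<noteq> \<bar>snd v\<bar>"
definition NN :: "int \<times> int \<Rightarrow> bool" where
  "NN v \<longleftrightarrow> fst v * snd v < 0"

lemma NN_cases: "NN (x,y) \<Longrightarrow> (x > 0 \<and> y < 0) \<or> (x < 0 \<and> y > 0)"
  by (auto simp: NN_def mult_less_0_iff)

lemma R1: "NN v \<Longrightarrow> DD (gm Rho v)"
proof (cases v)
  case (Pair x y)
  assume "NN v"
  then have "(x > 0 \<and> y < 0) \<or> (x < 0 \<and> y > 0)" using NN_cases Pair by blast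
  then show ?thesis using Pair
    by (auto simp: DD_def zero_less_mult_iff mult_less_0_iff)
qed

lemma R2: "NN v \<Longrightarrow> DD (gm Rho (gm Rho v))"
proof (cases v)
  case (Pair x y)
  assume "NN v"
  then have "(x > 0 \<and> y < 0) \<or> (x < 0 \<and> y > 0)" using NN_cases Pair by blast
  then show ?thesis using Pair
    by (auto simp: DD_def zero_less_mult_iff mult_less_0_iff)
qed

lemma S1: "DD v \<Longrightarrow> NN (gm Sig v)"
  by (cases v) (auto simp: DD_def NN_def mult_less_0_iff zero_less_mult_iff)

lemma alt_DD: "alt w \<Longrightarrow> NN v \<Longrightarrow> DD (mv w v)"
proof (induction w rule: alt.induct)
  case 1 then show ?case by (simp add: R1)
next
  case 2 then show ?case by (simp add: R2)
next
  case (3 w) then show ?case by (simp add: R1 S1)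
next
  case (4 w) then show ?case by (simp add: R2 S1)
qed

lemma red_alt: "red w \<Longrightarrow> w \<noteq> [] \<Longrightarrow> hd w = Rho \<Longrightarrow> last w = Rho \<Longrightarrow> alt w"
proof (induction "length w" arbitrary: w rule: less_induct)
  case less
  then obtain w1 where w: "w = Rho # w1" using less.prems by (metis list.collapse)
  show ?case
  proof (cases w1)
    case Nil then show ?thesis using w alt.intros by auto
  next
    case (Cons a w2)
    show ?thesis
    proof (cases a)
      case Rho
      show ?thesis
      proof (cases w2)
        case Nil then show ?thesis using w Cons Rho alt.intros by auto
      next
        case (Cons b w3)
        have b: "b = Sig" using less.prems(1) w \<open>w1 = a # w2\<close> Rho Cons by (cases b) auto
        show ?thesis
        proof (cases w3)
          case Nil then show ?thesis using less.prems w \<open>w1 = a # w2\<close> Cons b by auto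
        next
          case (Cons c w4)
          have c: "c = Rho" using less.prems(1) w \<open>w1 = a # w2\<close> \<open>w2 = b # w3\<close> b Cons by (cases c) auto
          have "red w3" using less.prems(1) w \<open>w1 = a # w2\<close> \<open>w2 = b # w3\<close> by (auto dest!: red_Cons)
          moreover have "last w3 = Rho" using less.prems(4) w \<open>w1 = a # w2\<close> \<open>w2 = b # w3\<close> Cons by auto
          ultimately have "alt w3" using less.hyps Cons c w \<open>w1 = a # w2\<close> \<open>w2 = b # w3\<close> by auto
          then show ?thesis using w \<open>w1 = a # w2\<close> \<open>w2 = b # w3\<close> Rho b alt.intros by auto
        qed
      qed
    next
      case Sig
      show ?thesis
      proof (cases w2)
        case Nil then show ?thesis using less.prems w \<open>w1 = a # w2\<close> Sig by auto
      next
        case (Cons c w4)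
        have c: "c = Rho" using less.prems(1) w \<open>w1 = a # w2\<close> Sig Cons by (cases c) auto
        have "red w2" using less.prems(1) w \<open>w1 = a # w2\<close> by (auto dest!: red_Cons)
        moreover have "last w2 = Rho" using less.prems(4) w \<open>w1 = a # w2\<close> Cons by auto
        ultimately have "alt w2" using less.hyps Cons c w \<open>w1 = a # w2\<close> by auto
        then show ?thesis using w \<open>w1 = a # w2\<close> Sig alt.intros by auto
      qed
    qed
  qed
qed

lemma psl_eq_refl: "psl_eq w w"
  by (simp add: psl_eq_def)

lemma psl_eq_trans: "psl_eq a b \<Longrightarrow> psl_eq b c \<Longrightarrow> psl_eq a c"
  unfolding psl_eq_def by (rule rtranclp_trans)

lemma psl_eq_step: "r \<in> {[Rho, Rho, Rho], [Sig, Sig]} \<Longrightarrow> psl_eq (u @ r @ v) (u @ v)"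
  unfolding psl_eq_def by (rule r_into_rtranclp) (auto intro: psl_step.intros)

lemma red_SS_infix: "red (u @ [Sig,Sig] @ v) \<Longrightarrow> False"
  by (induction u) (auto dest: red_Cons)

lemma red_snoc: "red (w @ [g]) \<Longrightarrow> red w"
proof (induction w rule: red.induct)
  case (1 a b c w) then show ?case by auto
next
  case (2 a b) then show ?case by auto
qed auto

lemma mv_form: "mv w (1,0) = (s,0) \<Longrightarrow> mv w (0,1) = (0,s) \<Longrightarrow> mv w (x,y) = (s*x, s*y)"
proof -
  assume h: "mv w (1,0) = (s,0)" "mv w (0,1) = (0,s)"
  obtain a b c d where "\<forall>x y. mv w (x,y) = (a*x+b*y, c*x+d*y)" using mv_lin by blast
  with h show ?thesis by auto
qed

lemma red_triv:
  assumes r: "red w" and h: "mv w (1,0) = (s,0)" "mv w (0,1) = (0,s)" and s: "s = 1 \<or> s = -1"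
  shows "w = []"
proof (rule ccontr)
  assume ne: "w \<noteq> []"
  have f: "mv w (x,y) = (s*x, s*y)" for x y using mv_form h by blast
  have n1: "NN (1,-1)" by (simp add: NN_def)
  have ss: "s*s = 1" using s by auto
  show False
  proof (cases "hd w")
    case Rho
    show ?thesis
    proof (cases "last w")
      case Rho
      then have "alt w" using red_alt r ne \<open>hd w = Rho\<close> by auto
      then have "DD (mv w (1,-1))" using alt_DD n1 by blast
      then show ?thesis using f[of 1 "-1"] ss by (simp add: DD_def)
    next
      case Sig
      obtain w' where w': "w = w' @ [Sig]" using Sig ne by (metis append_butlast_last_id)
      have "w' \<noteq> []" using w' \<open>hd w = Rho\<close> by auto
      moreover have "red w'" using r w' red_snoc by blast
      moreover have "hd w' = Rho" using w' \<open>hd w = Rho\<close> calculation by auto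
      moreover have "last w' = Rho"
      proof (rule ccontr)
        assume "last w' \<noteq> Rho"
        then have "last w' = Sig" by (cases "last w'") auto
        then obtain w'' where "w' = w'' @ [Sig]" using \<open>w' \<noteq> []\<close> by (metis append_butlast_last_id)
        then have "w = w'' @ [Sig,Sig] @ []" using w' by auto
        then show False using r red_SS_infix by metis 
      qed
      ultimately have "alt w'" using red_alt by blast
      then have "DD (mv w' (1,-1))" using alt_DD n1 by blast
      moreover have "mv w (-1,-1) = mv w' (1,-1)" using w' by (simp add: mv_append)
      ultimately show ?thesis using f[of "-1" "-1"] ss by (cases "mv w' (1,-1)") (auto simp: DD_def)
    qed
  next
    case Sig
    then obtain w1 where w1: "w = Sig # w1" using ne by (cases w) auto
    show ?thesis
    proof (cases "w1 = []")
      case True then show ?thesis using f[of 1 0] w1 by simp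
    next
      case False
      have "hd w1 = Rho"
      proof (rule ccontr)
        assume "hd w1 \<noteq> Rho"
        then have "hd w1 = Sig" by (cases "hd w1") auto
        then show False using r w1 False by (cases w1) auto
      qed
      show ?thesis
      proof (cases "last w1")
        case Rho
        have "red w1" using r w1 red_Cons by blast
        then have "alt w1" using red_alt False \<open>hd w1 = Rho\<close> Rho by blast
        then have "DD (mv w1 (1,-1))" using alt_DD n1 by blast
        then show ?thesis using f[of 1 "-1"] w1 ss
          by (cases "mv w1 (1,-1)") (auto simp: DD_def)
      next
        case Sig
        obtain w' where w': "w1 = w' @ [Sig]" using Sig False by (metis append_butlast_last_id)
        have "w' \<noteq> []" using w' \<open>hd w1 = Rho\<close> by auto
        moreover have "red w'" using r w1 w' red_snoc red_Cons by blast
        moreover have "hd w' = Rho" using w' \<open>hd w1 = Rho\<close> calculation by auto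
        moreover have "last w' = Rho"
        proof (rule ccontr)
          assume "last w' \<noteq> Rho"
          then have "last w' = Sig" by (cases "last w'") auto
          then obtain w'' where "w' = w'' @ [Sig]" using \<open>w' \<noteq> []\<close> by (metis append_butlast_last_id)
          then have "w = (Sig#w'') @ [Sig,Sig] @ []" using w' w1 by auto
          then show False using r red_SS_infix by metis 
        qed
        ultimately have "alt w'" using red_alt by blast
        then have "DD (mv w' (1,-1))" using alt_DD n1 by blast
        moreover have "mv w (-1,-1) = gm Sig (mv w' (1,-1))" using w' w1 by (simp add: mv_append)
        ultimately show ?thesis using f[of "-1" "-1"] ss
          by (cases "mv w' (1,-1)") (auto simp: DD_def)
      qed
    qed
  qed
qed

lemma group_main:
  "mv w (1,0) = (s,0) \<Longrightarrow> mv w (0,1) = (0,s) \<Longrightarrow> s = 1 \<or> s = -1 \<Longrightarrow> psl_eq w []"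
proof (induction "length w" arbitrary: w s rule: less_induct)
  case less
  show ?case
  proof (cases "red w")
    case True
    then show ?thesis using red_triv less.prems psl_eq_refl by blast
  next
    case False
    then obtain u r v where w: "w = u@r@v" and r: "r \<in> {[Rho,Rho,Rho],[Sig,Sig]}" using not_red by blast
    have st: "psl_eq w (u@v)" using w r psl_eq_step by blast
    show ?thesis
    proof (cases "r = [Sig,Sig]")
      case True
      have h: "mv w x = - mv (u@v) x" for x using w True by (simp add: mv_append mv_neg gm_SS)
      have h2: "mv (u@v) x = - mv w x" for x using h[of x] by simp
      have e: "mv (u@v) (1,0) = (-s,0)" "mv (u@v) (0,1) = (0,-s)" using less.prems(1,2) h2 by simp_all
      have len: "length (u@v) < length w" using w True by simp
      have ss: "-s = 1 \<or> -s = -1" using less.prems(3) by auto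
      have "psl_eq (u@v) []" using less.hyps[OF len e ss] .
      then show ?thesis using st psl_eq_trans by blast
    next
      case False
      then have rr: "r = [Rho,Rho,Rho]" using r by auto
      have "mv w x = mv (u@v) x" for x using w rr by (simp add: mv_append gm_RRR)
      then have e: "mv (u@v) (1,0) = (s,0)" "mv (u@v) (0,1) = (0,s)" using less.prems by auto
      have len: "length (u@v) < length w" using w rr by simp
      have "psl_eq (u@v) []" using less.hyps[OF len e less.prems(3)] .
      then show ?thesis using st psl_eq_trans by blast
    qed
  qed
qed


definition eta :: "'a::field \<Rightarrow> int \<times> int \<Rightarrow> int \<times> int \<Rightarrow> int \<Rightarrow> int \<Rightarrow> gen \<Rightarrow> 'a lop" where
  "eta q n1 n2 s1 s2 g = (case g of GA \<Rightarrow> ks (of_int s1) * E q n1 | GB \<Rightarrow> ks (of_int s2) * E q n2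
     | GC \<Rightarrow> - (ks (of_int (s1*s2)) * E q (n1+n2)))"

lemma step_rho:
  assumes "s1 = 1 \<or> s1 = -1" "s2 = 1 \<or> s2 = -1"
  shows "(\<lambda>g. Lin ks (eta q n1 n2 s1 s2) (img q Rho g)) = eta q n2 (-(n1+n2)) s2 (-s1*s2)"
proof
  fix g show "Lin ks (eta q n1 n2 s1 s2) (img q Rho g) = eta q n2 (-(n1+n2)) s2 (-s1*s2) g"
  proof (cases g)
    case GA then show ?thesis by (simp add: ks.Lin_gn eta_def)
  next
    case GB
    have "E q (- n1 - n2) = E q (n1 + n2)" using E_neg[of q "n1+n2"] by (simp add: algebra_simps)
    then show ?thesis using GB by (simp add: ks.Lin_gn eta_def E_neg ks_uminus)
  next
    case GC
    have v: "n2 + - (n1 + n2) = - n1" by (simp add: algebra_simps)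
    have c: "(of_int (s2 * (- s1 * s2)) :: 'a) = - of_int s1" using assms(2) by auto
    have c': "of_int s2 * (of_int s1 * of_int s2) = (of_int s1 :: 'a)" using assms(2) by auto
    show ?thesis using GC by (simp add: ks.Lin_gn eta_def E_neg ks_uminus v c c')
  qed
qed

lemma ks_swap: "ks a * X * (ks b * Y) = ks (a*b) * (X*Y)"
proof -
  have "X * (ks b * Y) = ks b * (X * Y)"
    by (simp only: mult.assoc[symmetric] ks.\<kappa>_comm[of b X, symmetric])
  then show ?thesis by (simp add: mult.assoc ks.\<kappa>_mult)
qed

lemma scal_lemma:
  fixes q :: "'a::field" assumes d: "q - inverse q \<noteq> 0"
  shows "- (ks c * X) + ks (inverse (q - inverse q)) * (ks c * (ks q * X + ks (inverse q) * Y)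
     - ks c * (ks (inverse q) * X + ks q * Y)) = - (ks c * Y)"
proof (rule lop_eqI)
  fix f u
  let ?x = "app X f u" and ?y = "app Y f u"
  have "c*(q*?x + inverse q*?y) - c*(inverse q*?x + q*?y) = (q - inverse q) * (c*(?x - ?y))"
    by (simp add: algebra_simps)
  then have "inverse (q - inverse q) * (c*(q*?x + inverse q*?y) - c*(inverse q*?x + q*?y)) = c*(?x - ?y)"
    using d by (simp add: mult.assoc[symmetric])
  then have "- (c * ?x) + inverse (q - inverse q) * (c*(q*?x + inverse q*?y) - c*(inverse q*?x + q*?y)) = - (c * ?y)"
    by (simp add: algebra_simps)
  moreover have "app (- (ks c * X) + ks (inverse (q - inverse q)) * (ks c * (ks q * X + ks (inverse q) * Y)
     - ks c * (ks (inverse q) * X + ks q * Y))) f u =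
    - (c * ?x) + inverse (q - inverse q) * (c*(q*?x + inverse q*?y) - c*(inverse q*?x + q*?y))"
    by (simp only: app_simps ks.rep_eq)
  moreover have "app (- (ks c * Y)) f u = - (c * ?y)"
    by (simp only: app_simps ks.rep_eq)
  ultimately show "app (- (ks c * X) + ks (inverse (q - inverse q)) * (ks c * (ks q * X + ks (inverse q) * Y)
     - ks c * (ks (inverse q) * X + ks q * Y))) f u = app (- (ks c * Y)) f u"
    by (simp only:)
qed

lemma step_sig:
  assumes q: "q \<noteq> 0" "q - inverse q \<noteq> 0" and o: "om n1 n2 = 1"
  shows "(\<lambda>g. Lin ks (eta q n1 n2 s1 s2) (img q Sig g)) = eta q n2 (-n1) s2 s1"
proof
  fix g show "Lin ks (eta q n1 n2 s1 s2) (img q Sig g) = eta q n2 (-n1) s2 s1 g"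
  proof (cases g)
    case GA then show ?thesis by (simp add: ks.Lin_gn eta_def)
  next
    case GB then show ?thesis by (simp add: ks.Lin_gn eta_def E_neg)
  next
    case GC
    have e1: "E q (n2 - n1) = E q (n1 - n2)" using E_neg[of q "n1 - n2"] by (simp add: algebra_simps)
    have L: "Lin ks (eta q n1 n2 s1 s2) (img q Sig g) =
      - (ks (of_int (s1*s2)) * E q (n1+n2)) + ks (inverse (q - inverse q)) *
        (ks (of_int s1 * of_int s2) * (E q n1 * E q n2) - ks (of_int s2 * of_int s1) * (E q n2 * E q n1))"
      using GC by (simp add: ks.Lin_gn ks.Lin_add ks.Lin_mult ks.Lin_sc ks.Lin_diff eta_def ks_swap)
    have cc: "of_int s1 * of_int s2 = (of_int (s1*s2)::'a)" "of_int s2 * of_int s1 = (of_int (s1*s2)::'a)"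
      by (simp_all add: mult.commute)
    have "Lin ks (eta q n1 n2 s1 s2) (img q Sig g) =
      - (ks (of_int (s1*s2)) * E q (n1+n2)) + ks (inverse (q - inverse q)) *
        (ks (of_int (s1*s2)) * (ks q * E q (n1+n2) + ks (inverse q) * E q (n1 - n2))
         - ks (of_int (s1*s2)) * (ks (inverse q) * E q (n1+n2) + ks q * E q (n1 - n2)))"
      unfolding L cc EE[OF q(1) o] EE'[OF q(1) o] ..
    also have "\<dots> = - (ks (of_int (s1*s2)) * E q (n1 - n2))"
      by (rule scal_lemma[OF q(2)])
    also have "\<dots> = eta q n2 (-n1) s2 s1 g"
      using GC e1 by (simp add: eta_def mult.commute)
    finally show ?thesis .
  qed
qed


lemma act_snoc: "act q (w @ [g]) x = act q w (subst (img q g) x)"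
  by (induction w) auto

lemma gm_om: "om (gm g a) (gm g b) = om a b"
  by (cases g; cases a; cases b) (simp_all add: om_def algebra_simps)

lemma mv_om: "om (mv w a) (mv w b) = om a b"
  by (induction w) (simp_all add: gm_om)

lemma invariant:
  fixes q :: "'a::field"
  assumes q: "q \<noteq> 0" "q - inverse q \<noteq> 0"
  shows "\<exists>s1 s2. (s1 = 1 \<or> s1 = -1) \<and> (s2 = 1 \<or> s2 = -1) \<and>
    (\<forall>x. Lin ks (eta q (1,0) (0,1) 1 1) (act q w x) = Lin ks (eta q (mv w (1,0)) (mv w (0,1)) s1 s2) x)"
proof (induction w rule: rev_induct)
  case Nil then show ?case by (intro exI[of _ 1]) simp
next
  case (snoc g w)
  then obtain s1 s2 where s: "s1 = 1 \<or> s1 = -1" "s2 = 1 \<or> s2 = -1"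
    and h: "\<And>x. Lin ks (eta q (1,0) (0,1) 1 1) (act q w x) = Lin ks (eta q (mv w (1,0)) (mv w (0,1)) s1 s2) x"
    by blast
  have o: "om (mv w (1,0)) (mv w (0,1)) = 1"
    using mv_om[of w "(1,0)" "(0,1)"] by (simp add: om_def[of "(1,0)"])
  have neg10: "mv w (-1,0) = - mv w (1,0)" using mv_neg[of w "(1,0)"] by simp
  have neg11: "mv w (-1,-1) = - (mv w (1,0) + mv w (0,1))"
    using mv_neg[of w "(1,1)"] mv_add[of w "(1,0)" "(0,1)"] by simp
  show ?case
  proof (cases g)
    case Rho
    show ?thesis
      apply (rule exI[of _ s2], rule exI[of _ "-s1*s2"])
      using s by (auto simp: act_snoc h ks.Lin_subst step_rho Rho mv_append neg11)
  next
    case Sig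
    show ?thesis
      apply (rule exI[of _ s2], rule exI[of _ s1])
      using s by (auto simp: act_snoc h ks.Lin_subst step_sig[OF q o] Sig mv_append neg10)
  qed
qed


lemma fld:
  fixes q :: "'a::field" assumes d: "q^2 - inverse q ^ 2 \<noteq> 0"
  and h: "Z = - ((q^2 - inverse q ^ 2) * x)"
  shows "x + inverse (q^2 - inverse q ^ 2) * Z = 0"
proof -
  have "inverse (q^2 - inverse q ^ 2) * Z = - x" using d unfolding h by (simp add: mult.assoc[symmetric])
  then show ?thesis by simp
qed

lemma fld2:
  fixes q :: "'a::field" assumes d: "q^2 - inverse q ^ 2 \<noteq> 0"
  and h: "Z = (q^2 - inverse q ^ 2) * x"
  shows "inverse (q^2 - inverse q ^ 2) * Z = x"
  using d unfolding h by (simp add: mult.assoc[symmetric])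

abbreviation "eta0 q \<equiv> eta q (1,0) (0,1) 1 1"

lemma cen_A:
  fixes q :: "'a::field"
  assumes q: "q \<noteq> 0" and d: "q^2 - inverse q ^ 2 \<noteq> 0"
  shows "Lin ks (eta0 q) (cen q genA genB genC) = 0"
proof -
  have bc: "E q (0,1) * E q (1,1) = ks (inverse q) * E q (1,2) + ks q * E q (1,0)"
    using EE'[OF q, of "(1,1)" "(0,1)"] by (simp add: om_def)
  have cb: "E q (1,1) * E q (0,1) = ks q * E q (1,2) + ks (inverse q) * E q (1,0)"
    using EE[OF q, of "(1,1)" "(0,1)"] by (simp add: om_def)
  show ?thesis
    apply (simp add: cen_def eta_def ks.Lin_add ks.Lin_mult ks.Lin_diff ks.Lin_sc ks.Lin_gn ks.\<kappa>_one mult.assoc bc cb)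
    apply (rule lop_eqI)
    apply (simp add: app_simps ks.rep_eq)
    apply (rule fld[OF d])
    apply (simp add: algebra_simps power2_eq_square)
    done
qed


lemma cen_B:
  fixes q :: "'a::field"
  assumes q: "q \<noteq> 0" and d: "q^2 - inverse q ^ 2 \<noteq> 0"
  shows "Lin ks (eta0 q) (cen q genB genC genA) = 0"
proof -
  have ac: "E q (1,0) * E q (1,1) = ks q * E q (2,1) + ks (inverse q) * E q (0,-1)"
    using EE[OF q, of "(1,0)" "(1,1)"] by (simp add: om_def)
  have ca: "E q (1,1) * E q (1,0) = ks (inverse q) * E q (2,1) + ks q * E q (0,-1)"
    using EE'[OF q, of "(1,0)" "(1,1)"] by (simp add: om_def)
  have n: "E q (0,-1) = E q (0,1)" using E_neg[of q "(0,1)"] by simp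
  show ?thesis
    apply (simp add: cen_def eta_def ks.Lin_add ks.Lin_mult ks.Lin_diff ks.Lin_sc ks.Lin_gn ks.\<kappa>_one mult.assoc ac ca n)
    apply (rule lop_eqI)
    apply (simp add: app_simps ks.rep_eq)
    apply (rule fld[OF d])
    apply (simp add: algebra_simps power2_eq_square)
    done
qed

lemma cen_C:
  fixes q :: "'a::field"
  assumes q: "q \<noteq> 0" and d: "q^2 - inverse q ^ 2 \<noteq> 0"
  shows "Lin ks (eta0 q) (cen q genC genA genB) = 0"
proof -
  have ab: "E q (1,0) * E q (0,1) = ks q * E q (1,1) + ks (inverse q) * E q (1,-1)"
    using EE[OF q, of "(1,0)" "(0,1)"] by (simp add: om_def)
  have ba: "E q (0,1) * E q (1,0) = ks (inverse q) * E q (1,1) + ks q * E q (1,-1)"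
    using EE'[OF q, of "(1,0)" "(0,1)"] by (simp add: om_def)
  show ?thesis
    apply (simp add: cen_def eta_def ks.Lin_add ks.Lin_mult ks.Lin_diff ks.Lin_sc ks.Lin_gn ks.\<kappa>_one mult.assoc ab ba)
    apply (rule lop_eqI)
    apply (simp add: app_simps ks.rep_eq)
    apply (rule fld2[OF d])
    apply (simp add: algebra_simps power2_eq_square)
    done
qed


lemma kill:
  fixes q :: "'a::field"
  assumes q: "q \<noteq> 0" and d: "q^2 - inverse q ^ 2 \<noteq> 0" and x: "x \<in> aw_ideal q"
  shows "Lin ks (eta0 q) x = 0"
proof -
  have "Lin ks (eta0 q) r = 0" if rr: "r \<in> aw_rels q" for r
  proof -
    obtain c g where r: "r = c * g - g * c" and c: "c \<in> {cen q genA genB genC, cen q genB genC genA, cen q genC genA genB}"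
      using rr unfolding aw_rels_def by blast
    have "Lin ks (eta0 q) c = 0" using c cen_A[OF q d] cen_B[OF q d] cen_C[OF q d] by blast
    then show ?thesis unfolding r by (simp add: ks.Lin_diff ks.Lin_mult)
  qed
  then show ?thesis using x unfolding aw_ideal_def using ks.Lin_ideal by blast
qed

definition dl :: "int \<times> int \<Rightarrow> 'a::field" where "dl u = (if u = 0 then 1 else 0)"

lemma app_TT_dl: "app (TT q v) dl u = (if u = v then 1 else 0)"
  by (simp add: TT.rep_eq dl_def om_def)

lemma detect:
  fixes q :: "'a::field"
  assumes h: "ks c * E q n = ks 1 * E q m" and m: "m \<noteq> - m"
  shows "n = m \<or> n = - m"
proof (rule ccontr)
  assume nn: "\<not> (n = m \<or> n = - m)"
  have "app (ks c * E q n) dl m = app (ks 1 * E q m) dl m" using h by simp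
  moreover have "m \<noteq> - n" using nn by auto
  ultimately show False using nn m by (auto simp: app_simps ks.rep_eq E_def app_TT_dl)
qed

theorem theorem3p13:
  fixes q :: "'a::field" and w :: "psl_gen list"
  assumes "q \<noteq> 0" and "q ^ 4 \<noteq> 1"
    and "\<forall>x :: 'a falg. act q w x - x \<in> aw_ideal q"
  shows "psl_eq w []"
proof -
  have q: "q \<noteq> 0" by fact
  have q2: "q^2 \<noteq> 1"
  proof
    assume a: "q^2 = 1"
    have "q^4 = (q^2)^2" by (simp flip: power_mult)
    then have "q^4 = 1" using a by simp
    then show False using assms(2) by simp
  qed
  have d1: "q - inverse q \<noteq> 0"
  proof
    assume "q - inverse q = 0"
    then have "q * q = q * inverse q" by simp
    then have "q^2 = 1" using q by (simp add: power2_eq_square)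
    then show False using q2 by simp
  qed
  have d: "q^2 - inverse q ^ 2 \<noteq> 0"
  proof
    assume "q^2 - inverse q ^ 2 = 0"
    then have "q^2 * q^2 = q^2 * inverse q ^ 2" by simp
    also have "\<dots> = (q * inverse q)^2" by (rule power_mult_distrib[symmetric])
    also have "\<dots> = 1" using q by simp
    finally have "q^4 = 1" by (simp flip: power_add)
    then show False using assms(2) by simp
  qed
  obtain s1 s2 where s: "s1 = 1 \<or> s1 = -1" "s2 = 1 \<or> s2 = -1"
    and h: "\<And>x. Lin ks (eta0 q) (act q w x) = Lin ks (eta q (mv w (1,0)) (mv w (0,1)) s1 s2) x"
    using invariant[OF q d1, of w] by blast
  have e: "Lin ks (eta q (mv w (1,0)) (mv w (0,1)) s1 s2) x = Lin ks (eta0 q) x" for x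
  proof -
    have "Lin ks (eta0 q) (act q w x - x) = 0" using kill[OF q d] assms(3) by blast
    then show ?thesis using h[of x] by (simp add: ks.Lin_diff)
  qed
  let ?n1 = "mv w (1,0)" and ?n2 = "mv w (0,1)"
  have "ks (of_int s1) * E q ?n1 = ks 1 * E q (1,0)"
    using e[of genA] by (simp add: ks.Lin_gn eta_def)
  then have A: "?n1 = (1,0) \<or> ?n1 = -(1,0)" by (rule detect) simp
  have "ks (of_int s2) * E q ?n2 = ks 1 * E q (0,1)"
    using e[of genB] by (simp add: ks.Lin_gn eta_def)
  then have B: "?n2 = (0,1) \<or> ?n2 = -(0,1)" by (rule detect) simp
  have "- (ks (of_int (s1*s2)) * E q (?n1 + ?n2)) = - (ks 1 * E q ((1,0) + (0,1)))"
    using e[of genC] by (simp only: ks.Lin_gn eta_def gen.case of_int_1 mult_1)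
  then have "ks (of_int (s1*s2)) * E q (?n1 + ?n2) = ks 1 * E q (1,1)" by simp
  then have C: "?n1 + ?n2 = (1,1) \<or> ?n1 + ?n2 = -(1,1)" by (rule detect) simp
  have "(?n1 = (1,0) \<and> ?n2 = (0,1)) \<or> (?n1 = (-1,0) \<and> ?n2 = (0,-1))"
  proof (cases "?n1 = (1,0)")
    case True
    then show ?thesis using B C by auto
  next
    case False
    then have "?n1 = (-1,0)" using A by simp
    then show ?thesis using B C by auto
  qed
  then show ?thesis
  proof
    assume "?n1 = (1,0) \<and> ?n2 = (0,1)"
    then show ?thesis using group_main[of w 1] by simp
  next
    assume "?n1 = (-1,0) \<and> ?n2 = (0,-1)"
    then show ?thesis using group_main[of w "-1"] by simp
  qed
qed


end
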